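(* Let $c>1/2$ and let $0<c_1<1<c_2$ be the two roots of $v\mapsto\phi(v)-c$, where $\phi(v)=\frac{v^2}{2}-\log v$. Then $$T_{c,2}\ge2\sqrt2\Big[\sqrt{\tfrac{c_1}{1+c_1}}+\sqrt{\tfrac{c_2}{1+c_2}}\Big].$$
   Context: Consider on $\{(u,v)\in\mathbb{R}^2:v>0\}$ the ODE $\dot u=v-\frac1v$, $\dot v=-u$. The function $H(u,v)=\frac12u^2+\phi(v)$, $\phi(v)=\frac{v^2}2-\log v$, is a first integral with minimum $1/2$ at $(0,1)$; for $c>1/2$ the level set $\{H=c,\ v>0\}$ is a closed curve carrying a periodic solution, and $T_{c,2}$ denotes its (minimal) period, equivalently $T_{c,2}=\sqrt2\int_{c_1}^{c_2}\frac{dv}{\sqrt{c-\phi(v)}}$. *)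

theory Defs
  imports "HOL-Analysis.Analysis"
begin

definition phi :: "real \<Rightarrow> real" where
  "phi v = v^2 / 2 - ln v"

text \<open>Period of the closed orbit on the level set H = c, via the paper's formula
  T_{c,2} = sqrt 2 * int_{c1}^{c2} dv / sqrt (c - phi v), c1 < c2 the roots of phi v = c.
  The integrand is absolutely integrable (inverse square-root singularities).\<close>
definition T2 :: "real \<Rightarrow> real \<Rightarrow> real \<Rightarrow> real" where
  "T2 c c1 c2 = sqrt 2 * integral {c1..c2} (\<lambda>v. 1 / sqrt (c - phi v))"

end

theory Submission
  imports Defs
begin

lemma inv_sqrt_anti: "0 < (x::real) \<Longrightarrow> x \<le> y \<Longrightarrow> 1 / sqrt y \<le> 1 / sqrt x"
  by (simp add: frac_le)

lemma int_left:
  fixes a c1 b :: real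
  assumes "a > 0" "c1 \<le> b"
  shows "((\<lambda>v. 1 / sqrt (a * (v - c1))) has_integral 2 * sqrt (b - c1) / sqrt a) {c1..b}"
proof -
  have "((\<lambda>v. 1 / sqrt (a * (v - c1))) has_integral
          ((\<lambda>v. 2 * sqrt (v - c1) / sqrt a) b - (\<lambda>v. 2 * sqrt (v - c1) / sqrt a) c1)) {c1..b}"
  proof (rule fundamental_theorem_of_calculus_interior)
    show "continuous_on {c1..b} (\<lambda>v. 2 * sqrt (v - c1) / sqrt a)"
      using assms by (intro continuous_intros) auto
    fix x assume x: "x \<in> {c1<..<b}"
    have "((\<lambda>v. 2 * sqrt (v - c1) / sqrt a) has_real_derivative
            2 * (inverse (sqrt (x - c1)) / 2 * 1) / sqrt a) (at x)"
    proof -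
      have "((\<lambda>v. sqrt (v - c1)) has_real_derivative (inverse (sqrt (x - c1)) / 2 * 1)) (at x)"
        by (rule DERIV_chain2[OF DERIV_real_sqrt]) (use x in \<open>auto intro!: derivative_eq_intros\<close>)
      then show ?thesis by (intro DERIV_cdivide DERIV_cmult) 
    qed
    moreover have "2 * (inverse (sqrt (x - c1)) / 2 * 1) / sqrt a = 1 / sqrt (a * (x - c1))"
      using x assms unfolding real_sqrt_mult by (simp add: field_simps)
    ultimately show "((\<lambda>v. 2 * sqrt (v - c1) / sqrt a) has_vector_derivative
            1 / sqrt (a * (x - c1))) (at x)"
      by (simp add: has_real_derivative_iff_has_vector_derivative)
  qed (use assms in auto)
  then show ?thesis by simp
qed

lemma int_right:
  fixes a c2 b :: real
  assumes "a > 0" "b \<le> c2"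
  shows "((\<lambda>v. 1 / sqrt (a * (c2 - v))) has_integral 2 * sqrt (c2 - b) / sqrt a) {b..c2}"
proof -
  have "((\<lambda>v. 1 / sqrt (a * (c2 - v))) has_integral
          ((\<lambda>v. - 2 * sqrt (c2 - v) / sqrt a) c2 - (\<lambda>v. - 2 * sqrt (c2 - v) / sqrt a) b)) {b..c2}"
  proof (rule fundamental_theorem_of_calculus_interior)
    show "continuous_on {b..c2} (\<lambda>v. - 2 * sqrt (c2 - v) / sqrt a)"
      using assms by (intro continuous_intros) auto
    fix x assume x: "x \<in> {b<..<c2}"
    have "((\<lambda>v. - 2 * sqrt (c2 - v) / sqrt a) has_real_derivative
            - 2 * (inverse (sqrt (c2 - x)) / 2 * (0 - 1)) / sqrt a) (at x)"
    proof -
      have "((\<lambda>v. sqrt (c2 - v)) has_real_derivative (inverse (sqrt (c2 - x)) / 2 * (0 - 1))) (at x)"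
        by (rule DERIV_chain2[OF DERIV_real_sqrt]) (use x in \<open>auto intro!: derivative_eq_intros\<close>)
      then show ?thesis by (intro DERIV_cdivide DERIV_cmult) 
    qed
    moreover have "- 2 * (inverse (sqrt (c2 - x)) / 2 * (0 - 1)) / sqrt a = 1 / sqrt (a * (c2 - x))"
      using x assms unfolding real_sqrt_mult by (simp add: field_simps)
    ultimately show "((\<lambda>v. - 2 * sqrt (c2 - v) / sqrt a) has_vector_derivative
            1 / sqrt (a * (c2 - x))) (at x)"
      by (simp add: has_real_derivative_iff_has_vector_derivative)
  qed (use assms in auto)
  then show ?thesis by simp
qed

lemma half:
  fixes f l d :: "real \<Rightarrow> real" and a b L :: real
  assumes "a < b" "continuous_on {a<..<b} f"
    and "d integrable_on {a..b}" "(l has_integral L) {a..b}"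
    and "\<And>x. x \<in> {a<..<b} \<Longrightarrow> l x \<le> f x \<and> 0 \<le> f x \<and> f x \<le> d x"
  shows "f integrable_on {a..b} \<and> L \<le> integral {a..b} f"
proof -
  have "f integrable_on {a<..<b}"
  proof (rule measurable_bounded_by_integrable_imp_integrable_real)
    show "f \<in> borel_measurable (lebesgue_on {a<..<b})"
      using assms(2) by (intro continuous_imp_measurable_on_sets_lebesgue) auto
    show "d integrable_on {a<..<b}" using assms(3) integrable_on_open_interval_real by blast
    show "\<And>x. x \<in> {a<..<b} \<Longrightarrow> \<bar>f x\<bar> \<le> d x" using assms(5) by fastforce
  qed auto
  then have fi: "f integrable_on {a..b}" using integrable_on_open_interval_real by blast
  have li: "l integrable_on {a<..<b}" using assms(4) integrable_on_open_interval_real by blast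
  have "integral {a<..<b} l \<le> integral {a<..<b} f"
    using li \<open>f integrable_on {a<..<b}\<close> assms(5) by (intro integral_le) auto
  then have "L \<le> integral {a..b} f"
    using assms(4) integral_open_interval_real by (metis integral_unique)
  with fi show ?thesis by blast
qed

theorem lemmaA4:
  fixes c c1 c2 :: real
  assumes "c > 1/2"
    and "0 < c1" and "c1 < 1" and "1 < c2"
    and "phi c1 = c" and "phi c2 = c"
  shows "T2 c c1 c2 \<ge> 2 * sqrt 2 * (sqrt (c1 / (1 + c1)) + sqrt (c2 / (1 + c2)))"
proof -
  define f where "f = (\<lambda>v. 1 / sqrt (c - phi v))"
  define a1 where "a1 = 1 / c1 - c1"
  define a2 where "a2 = c2 - 1 / c2"
  have a1: "a1 > 0" using assms mult_strict_mono[of c1 1 c1 1] by (simp add: a1_def field_simps)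
  have a2: "a2 > 0" using assms mult_strict_mono[of 1 c2 1 c2] by (simp add: a2_def field_simps)
  have c1e: "c = c1^2/2 - ln c1" and c2e: "c = c2^2/2 - ln c2"
    using assms by (auto simp: phi_def)
  have P1: "c - phi v \<le> a1 * (v - c1)" if "v > 0" for v
  proof -
    have "ln (v / c1) \<le> v / c1 - 1" using that assms by (intro ln_le_minus_one) auto
    moreover have "ln (v / c1) = ln v - ln c1" using that assms by (simp add: ln_div)
    moreover have "v / c1 - 1 = a1 * (v - c1) + c1 * (v - c1)" using assms by (simp add: a1_def field_simps)
    moreover have "c1^2/2 - v^2/2 + c1*(v-c1) = -((v-c1)^2/2)" by (simp add: power2_eq_square field_simps)
    moreover have "(v - c1)^2 \<ge> 0" by simp
    ultimately show ?thesis using c1e unfolding phi_def by linarith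
  qed
  have P2: "c - phi v \<le> a2 * (c2 - v)" if "v > 0" for v
  proof -
    have "ln (v / c2) \<le> v / c2 - 1" using that assms by (intro ln_le_minus_one) auto
    moreover have "ln (v / c2) = ln v - ln c2" using that assms by (simp add: ln_div)
    moreover have "v / c2 - 1 = a2 * (c2 - v) + c2 * (v - c2)" using assms by (simp add: a2_def field_simps)
    moreover have "c2^2/2 - v^2/2 + c2*(v-c2) = -((v-c2)^2/2)" by (simp add: power2_eq_square field_simps)
    moreover have "(v - c2)^2 \<ge> 0" by simp
    ultimately show ?thesis using c2e unfolding phi_def by linarith
  qed
  have P3: "c - phi v \<ge> (v - c1) * (c2 - v) / 2" if "c1 \<le> v" "v \<le> c2" for v
  proof -
    define t where "t = (c2 - v) / (c2 - c1)"
    have t: "0 \<le> t" "t \<le> 1" using that assms by (auto simp: t_def field_simps)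
    have ne: "c2 - c1 \<noteq> 0" using assms by simp
    have tt: "t * (c2 - c1) = c2 - v" using ne by (simp add: t_def)
    have v: "v = t * c1 + (1 - t) * c2" using tt by (simp add: algebra_simps)
    have "t * ln c1 + (1 - t) * ln c2 \<le> ln (t * c1 + (1 - t) * c2)"
      using concave_onD[OF ln_concave, of "1-t" c1 c2] t assms by auto
    then have "t * ln c1 + (1 - t) * ln c2 \<le> ln v" using v by simp
    moreover have "t * ln c1 + (1 - t) * ln c2 = t * c1^2/2 + (1-t) * c2^2/2 - c"
    proof -
      have l1: "ln c1 = c1^2/2 - c" and l2: "ln c2 = c2^2/2 - c" using c1e c2e by auto
      show ?thesis unfolding l1 l2 by (simp add: algebra_simps)
    qed
    moreover have "t * c1^2 + (1-t) * c2^2 - v^2 = (v - c1) * (c2 - v)"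
    proof -
      have "t * c1^2 + (1-t) * c2^2 - (t * c1 + (1 - t) * c2)^2 = ((t * c1 + (1 - t) * c2) - c1) * (c2 - (t * c1 + (1 - t) * c2))"
        by (simp add: power2_eq_square algebra_simps)
      then show ?thesis using v by metis
    qed
    ultimately show ?thesis by (simp add: phi_def)
  qed
  have qpos: "c - phi v > 0" if "c1 < v" "v < c2" for v
  proof -
    have "(v - c1) * (c2 - v) > 0" using that by simp
    with P3[of v] that have "(v - c1) * (c2 - v) / 2 \<le> c - phi v" "(v - c1) * (c2 - v) / 2 > 0" by auto
    then show ?thesis by linarith
  qed
  have cont: "continuous_on {c1<..<c2} f"
    unfolding f_def phi_def
  proof (intro continuous_intros ballI)
    fix x assume "x \<in> {c1<..<c2}"
    then show "x \<noteq> 0" "sqrt (c - (x\<^sup>2 / 2 - ln x)) \<noteq> 0"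
      using qpos[of x] assms by (auto simp: phi_def)
  qed simp
  have contL: "continuous_on {c1<..<1} f" by (rule continuous_on_subset[OF cont]) (use assms in auto)
  have contR: "continuous_on {1<..<c2} f" by (rule continuous_on_subset[OF cont]) (use assms in auto)
  define k1 where "k1 = (c2 - 1) / 2"
  define k2 where "k2 = (1 - c1) / 2"
  have k1: "k1 > 0" and k2: "k2 > 0" using assms by (auto simp: k1_def k2_def)
  have L: "f integrable_on {c1..1} \<and> 2 * sqrt (1 - c1) / sqrt a1 \<le> integral {c1..1} f"
  proof (rule half[OF _ contL])
    show "(\<lambda>v. 1 / sqrt (k1 * (v - c1))) integrable_on {c1..1}"
      using int_left[OF k1, of c1 1] assms by (auto simp: integrable_on_def)
    show "((\<lambda>v. 1 / sqrt (a1 * (v - c1))) has_integral 2 * sqrt (1 - c1) / sqrt a1) {c1..1}"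
      using int_left[OF a1, of c1 1] assms by simp
    fix x assume x: "x \<in> {c1<..<1}"
    have q: "c - phi x > 0" using qpos[of x] x assms by auto
    have lo: "k1 * (x - c1) \<le> c - phi x"
    proof -
      have "(c2-1)*(x-c1) \<le> (c2-x)*(x-c1)" using x by (intro mult_right_mono) auto
      moreover have "k1 * (x - c1) = (c2-1)*(x-c1)/2" by (simp add: k1_def)
      moreover have "(x - c1) * (c2 - x) / 2 = (c2-x)*(x-c1)/2" by simp
      ultimately have "k1 * (x - c1) \<le> (x - c1) * (c2 - x) / 2" by linarith
      moreover have "(x - c1) * (c2 - x) / 2 \<le> c - phi x" using P3[of x] x assms by auto
      ultimately show ?thesis by linarith
    qed
    have k1p: "k1 * (x - c1) > 0" using k1 x by simp
    show "1 / sqrt (a1 * (x - c1)) \<le> f x \<and> 0 \<le> f x \<and> f x \<le> 1 / sqrt (k1 * (x - c1))"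
      unfolding f_def using inv_sqrt_anti[OF q P1[of x]] inv_sqrt_anti[OF k1p lo] q x assms
      by auto
  qed (use assms in auto)
  have R: "f integrable_on {1..c2} \<and> 2 * sqrt (c2 - 1) / sqrt a2 \<le> integral {1..c2} f"
  proof (rule half[OF _ contR])
    show "(\<lambda>v. 1 / sqrt (k2 * (c2 - v))) integrable_on {1..c2}"
      using int_right[OF k2, of 1 c2] assms by (auto simp: integrable_on_def)
    show "((\<lambda>v. 1 / sqrt (a2 * (c2 - v))) has_integral 2 * sqrt (c2 - 1) / sqrt a2) {1..c2}"
      using int_right[OF a2, of 1 c2] assms by simp
    fix x assume x: "x \<in> {1<..<c2}"
    have q: "c - phi x > 0" using qpos[of x] x assms by auto
    have lo: "k2 * (c2 - x) \<le> c - phi x"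
    proof -
      have "(1-c1)*(c2-x) \<le> (x-c1)*(c2-x)" using x by (intro mult_right_mono) auto
      moreover have "k2 * (c2 - x) = (1-c1)*(c2-x)/2" by (simp add: k2_def)
      ultimately have "k2 * (c2 - x) \<le> (x - c1) * (c2 - x) / 2" by linarith
      moreover have "(x - c1) * (c2 - x) / 2 \<le> c - phi x" using P3[of x] x assms by auto
      ultimately show ?thesis by linarith
    qed
    have k2p: "k2 * (c2 - x) > 0" using k2 x by simp
    show "1 / sqrt (a2 * (c2 - x)) \<le> f x \<and> 0 \<le> f x \<and> f x \<le> 1 / sqrt (k2 * (c2 - x))"
      unfolding f_def using inv_sqrt_anti[OF q P2[of x]] inv_sqrt_anti[OF k2p lo] q x assms
      by auto
  qed (use assms in auto)
  have comb: "integral {c1..1} f + integral {1..c2} f = integral {c1..c2} f"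
    proof (rule Henstock_Kurzweil_Integration.integral_combine)
    show "f integrable_on {c1..c2}" using L R assms by (intro Henstock_Kurzweil_Integration.integrable_combine[of c1 1 c2]) auto
  qed (use assms in auto)
  have e1: "sqrt (1 - c1) / sqrt a1 = sqrt (c1 / (1 + c1))"
  proof -
    have "c1*c1 < 1" using assms mult_strict_mono[of c1 1 c1 1] by auto
    then have "(1 - c1) / a1 = c1 / (1 + c1)" using assms
      by (simp add: a1_def field_simps power2_eq_square)
    then show ?thesis by (metis real_sqrt_divide)
  qed
  have e2: "sqrt (c2 - 1) / sqrt a2 = sqrt (c2 / (1 + c2))"
  proof -
    have "c2*c2 > 1" using assms mult_strict_mono[of 1 c2 1 c2] by auto
    then have "(c2 - 1) / a2 = c2 / (1 + c2)" using assms
      by (simp add: a2_def field_simps power2_eq_square)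
    then show ?thesis by (metis real_sqrt_divide)
  qed
  have "2 * (sqrt (c1 / (1 + c1)) + sqrt (c2 / (1 + c2))) \<le> integral {c1..c2} f"
  proof -
    have "2 * sqrt (1 - c1) / sqrt a1 = 2 * sqrt (c1 / (1 + c1))" using e1 by simp
    moreover have "2 * sqrt (c2 - 1) / sqrt a2 = 2 * sqrt (c2 / (1 + c2))" using e2 by simp
    ultimately show ?thesis using conjunct2[OF L] conjunct2[OF R] comb unfolding distrib_left by linarith
  qed
  then show ?thesis
    unfolding T2_def f_def[symmetric] by (simp add: mult.assoc)
qed

end
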